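(* Let $X_1$ be a real random variable with c.d.f. $F$ and mean $\mu$, let $p\geq1$, and let $0<a<b<1$, $\xi:=1-(b-a)$. Then \[\nu_p^{(a,b)}\leq\left(\frac{1}{(1-\xi)^{1/p}}+\frac{\xi^{\frac{p-1}{p}}}{1-\xi}\right)\nu_p.\]
   Context: $\nu_p:=(\mathbb{E}|X_1-\mu|^p)^{1/p}$. $F^{-1}(u):=\inf\{t:F(t)\ge u\}$. $\mu^{(a,b)}:=\frac1{b-a}\int_a^bF^{-1}(u)du$ and $\nu_p^{(a,b)}:=\left(\frac1{b-a}\int_a^b|F^{-1}(u)-\mu^{(a,b)}|^pdu\right)^{1/p}$, i.e. the $p$-th centered absolute moment of $F^{-1}(U)$ with $U$ uniform on $(a,b)$. *)

theory Defs
  imports "HOL-Probability.Probability"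
begin

definition cdf_of :: "'a measure \<Rightarrow> ('a \<Rightarrow> real) \<Rightarrow> real \<Rightarrow> real" where
  "cdf_of M X t = measure M {x \<in> space M. X x \<le> t}"

definition quantile :: "(real \<Rightarrow> real) \<Rightarrow> real \<Rightarrow> real" where
  "quantile F u = Inf {t. u \<le> F t}"

definition trimmed_mean :: "(real \<Rightarrow> real) \<Rightarrow> real \<Rightarrow> real \<Rightarrow> real" where
  "trimmed_mean F a b = (1 / (b - a)) * (LBINT u:{a..b}. quantile F u)"

definition trimmed_nu :: "real \<Rightarrow> (real \<Rightarrow> real) \<Rightarrow> real \<Rightarrow> real \<Rightarrow> real" where
  "trimmed_nu p F a b =
     ((1 / (b - a)) * (LBINT u:{a..b}. \<bar>quantile F u - trimmed_mean F a b\<bar> powr p)) powr (1 / p)"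

definition central_abs_moment_root :: "real \<Rightarrow> 'a measure \<Rightarrow> ('a \<Rightarrow> real) \<Rightarrow> real" where
  "central_abs_moment_root p M X =
     (\<integral>x. \<bar>X x - (\<integral>y. X y \<partial>M)\<bar> powr p \<partial>M) powr (1 / p)"

end

theory Submission
  imports Defs
begin

lemma tangent_powr:
  fixes p c s :: real
  assumes p: "1 \<le> p" and c: "0 < c" and s: "0 \<le> s"
  shows "c powr p + p * c powr (p - 1) * (s - c) \<le> s powr p"
proof (cases "s = 0")
  case True
  have "c powr p + p * c powr (p - 1) * (0 - c) = (1 - p) * c powr p"
    using c by (simp add: powr_diff algebra_simps)
  also have "\<dots> \<le> 0" using p c by (simp add: mult_nonpos_nonneg)
  finally show ?thesis using True by simp
next
  case False
  have d: "((\<lambda>x. x powr p) has_field_derivative p * c powr (p - 1)) (at c within {0<..})"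
    using c by (auto intro!: derivative_eq_intros)
  have "p * c powr (p - 1) * (s - c) \<le> s powr p - c powr p"
    by (rule convex_on_imp_above_tangent[OF powr_convex[OF p] _ _ _ d])
       (use c s False in \<open>auto simp: interior_open\<close>)
  then show ?thesis by simp
qed

lemma convex_split_powr:
  fixes p t x y :: real
  assumes p: "1 \<le> p" and t: "0 < t" "t < 1"
  shows "\<bar>x + y\<bar> powr p \<le> (1 - t) powr (1 - p) * \<bar>x\<bar> powr p + t powr (1 - p) * \<bar>y\<bar> powr p"
proof -
  define u where "u = \<bar>x\<bar> / (1 - t)"
  define v where "v = \<bar>y\<bar> / t"
  define z where "z = (1 - t) * u + t * v"
  have u0: "0 \<le> u" and v0: "0 \<le> v" using t by (auto simp: u_def v_def)
  have z: "z = \<bar>x\<bar> + \<bar>y\<bar>" using t by (simp add: z_def u_def v_def)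
  have "\<bar>x + y\<bar> powr p \<le> z powr p"
    using z p by (auto intro!: powr_mono2 abs_triangle_ineq)
  also have "z powr p \<le> (1 - t) * u powr p + t * v powr p"
  proof (cases "z = 0")
    case True thus ?thesis using u0 v0 t by simp
  next
    case False
    then have zp: "0 < z" using z by simp
    have 1: "z powr p + p * z powr (p - 1) * (u - z) \<le> u powr p"
      by (rule tangent_powr[OF p zp u0])
    have 2: "z powr p + p * z powr (p - 1) * (v - z) \<le> v powr p"
      by (rule tangent_powr[OF p zp v0])
    have "(1 - t) * (z powr p + p * z powr (p - 1) * (u - z)) + t * (z powr p + p * z powr (p - 1) * (v - z))
        = z powr p"
      unfolding z_def by (simp add: algebra_simps)
    moreover have "(1 - t) * (z powr p + p * z powr (p - 1) * (u - z)) \<le> (1 - t) * u powr p"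
      using 1 t by (intro mult_left_mono) auto
    moreover have "t * (z powr p + p * z powr (p - 1) * (v - z)) \<le> t * v powr p"
      using 2 t by (intro mult_left_mono) auto
    ultimately show ?thesis by linarith
  qed
  also have "(1 - t) * u powr p = (1 - t) powr (1 - p) * \<bar>x\<bar> powr p"
    using t by (simp add: u_def powr_divide powr_diff field_simps)
  also have "t * v powr p = t powr (1 - p) * \<bar>y\<bar> powr p"
    using t by (simp add: v_def powr_divide powr_diff field_simps)
  finally show ?thesis .
qed

lemma mink_alg:
  fixes A B p :: real
  assumes A: "0 < A" and B: "0 < B"
  shows "(1 - B / (A + B)) powr (1 - p) * A powr p + (B / (A + B)) powr (1 - p) * B powr p
         = (A + B) powr p"
proof -
  have e: "1 - B / (A + B) = A / (A + B)" using A B by (simp add: field_simps)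
  have g: "(C / (A + B)) powr (1 - p) * C powr p = (A + B) powr (p - 1) * C" if C: "0 < C" for C
  proof -
    have "(C / (A + B)) powr (1 - p) = C powr (1 - p) / (A + B) powr (1 - p)"
      using A B C by (simp add: powr_divide)
    moreover have "C powr (1 - p) * C powr p = C"
      using C by (simp add: powr_add[symmetric])
    moreover have "1 / (A + B) powr (1 - p) = (A + B) powr (p - 1)"
      using A B by (simp add: powr_minus_divide[symmetric] )
    ultimately show ?thesis by (metis (no_types, lifting) mult.commute times_divide_eq_left mult.assoc times_divide_eq_right mult_1_right)
  qed
  have 1: "(A / (A + B)) powr (1 - p) * A powr p = (A + B) powr (p - 1) * A" using g A by blast
  have 2: "(B / (A + B)) powr (1 - p) * B powr p = (A + B) powr (p - 1) * B" using g B by blast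
  have "(A + B) powr (p - 1) * A + (A + B) powr (p - 1) * B = (A + B) powr (p - 1) * (A + B)"
    by (simp add: algebra_simps)
  also have "\<dots> = (A + B) powr p" using A B by (simp add: powr_diff)
  finally show ?thesis using e 1 2 by simp
qed


lemma set_integral_to_Omega:
  fixes f :: "real \<Rightarrow> real"
  assumes "0 < a" "b < 1"
  shows "(LBINT u:{a..b}. f u) = (\<integral>u. indicator {a..b} u * f u \<partial>restrict_space lborel {0<..<1})"
proof -
  have "(\<integral>u. indicator {a..b} u * f u \<partial>restrict_space lborel {0<..<1})
      = (\<integral>u. indicator {0<..<1} u *\<^sub>R (indicator {a..b} u * f u) \<partial>lborel)"
    by (rule integral_restrict_space) simp
  also have "\<dots> = (LBINT u:{a..b}. f u)"
    unfolding set_lebesgue_integral_def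
    by (rule Bochner_Integration.integral_cong) (use assms in \<open>auto simp: indicator_def\<close>)
  finally show ?thesis by simp
qed

lemma quantile_transfer:
  fixes M :: "'a measure" and X :: "'a \<Rightarrow> real"
  assumes "prob_space M" and Xm: "X \<in> borel_measurable M"
  shows "distr (restrict_space lborel {0<..<1}) borel (quantile (cdf_of M X)) = distr M borel X"
    and "quantile (cdf_of M X) \<in> borel_measurable (restrict_space lborel {0<..<1})"
proof -
  interpret M: prob_space M by fact
  define N where "N = distr M borel X"
  have rd: "real_distribution N"
    unfolding N_def real_distribution_def real_distribution_axioms_def
    using M.prob_space_distr Xm by simp
  have cdfN: "cdf N = cdf_of M X"
  proof
    fix x
    have "cdf N x = measure M (X -` {..x} \<inter> space M)"
      unfolding cdf_def N_def using Xm by (simp add: measure_distr)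
    also have "X -` {..x} \<inter> space M = {y \<in> space M. X y \<le> x}" by auto
    finally show "cdf N x = cdf_of M X x" by (simp add: cdf_of_def)
  qed
  interpret C: cdf_distribution N unfolding cdf_distribution_def by (rule rd)
  have Qe: "(\<lambda>\<omega>. Inf {x. \<omega> \<le> cdf N x}) = quantile (cdf_of M X)"
    by (simp add: quantile_def cdfN fun_eq_iff)
  show "distr (restrict_space lborel {0<..<1}) borel (quantile (cdf_of M X)) = distr M borel X"
    using C.distr_I_eq_M Qe unfolding N_def by metis
  show "quantile (cdf_of M X) \<in> borel_measurable (restrict_space lborel {0<..<1})"
  proof -
    have "sets (restrict_space borel {0<..<1::real}) = sets (restrict_space lborel {0<..<1})"
      by (simp add: sets_restrict_space)
    then have "borel_measurable (restrict_space borel {0<..<1::real}) = borel_measurable (restrict_space lborel {0<..<1})"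
      by (rule measurable_cong_sets) simp
    then show ?thesis using C.measurable_CI Qe by metis
  qed
qed

theorem proposition4p3:
  fixes M :: "'a measure" and X :: "'a \<Rightarrow> real" and p a b :: real
  assumes "prob_space M"
    and "X \<in> borel_measurable M"
    and "integrable M X"
    and "integrable M (\<lambda>x. \<bar>X x - (\<integral>y. X y \<partial>M)\<bar> powr p)"
    and "1 \<le> p"
    and "0 < a" and "a < b" and "b < 1"
  shows "let \<xi> = 1 - (b - a) in
    trimmed_nu p (cdf_of M X) a b
      \<le> (1 / ((1 - \<xi>) powr (1 / p)) + \<xi> powr ((p - 1) / p) / (1 - \<xi>))
          * central_abs_moment_root p M X"
proof -
  note Xm[measurable] = assms(2)
  have p: "1 \<le> p" and ab: "0 < a" "a < b" "b < 1" using assms by auto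
  interpret M: prob_space M by fact
  define \<Omega> where "\<Omega> = restrict_space lborel {0<..<1::real}"
  define Q where "Q = quantile (cdf_of M X)"
  have QN: "distr \<Omega> borel Q = distr M borel X"
    unfolding \<Omega>_def Q_def by (rule quantile_transfer[OF assms(1,2)])
  have Qm[measurable]: "Q \<in> borel_measurable \<Omega>"
    unfolding \<Omega>_def Q_def by (rule quantile_transfer[OF assms(1,2)])
  interpret O: prob_space \<Omega>
    unfolding \<Omega>_def
    by (auto simp add: emeasure_restrict_space space_restrict_space intro!: prob_spaceI)
  have spO: "space \<Omega> = {0<..<1}" by (simp add: \<Omega>_def space_restrict_space)
  have transfer: "integrable \<Omega> (\<lambda>u. h (Q u)) \<and> integral\<^sup>L \<Omega> (\<lambda>u. h (Q u)) = integral\<^sup>L M (\<lambda>x. h (X x))"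
    if "integrable M (\<lambda>x. h (X x))" and hm[measurable]: "h \<in> borel_measurable borel" for h :: "real \<Rightarrow> real"
  proof -
    have "integrable (distr M borel X) h" using that by (subst integrable_distr_eq) auto
    then have "integrable (distr \<Omega> borel Q) h" using QN by simp
    then have 1: "integrable \<Omega> (\<lambda>u. h (Q u))" by (subst (asm) integrable_distr_eq) auto
    have "integral\<^sup>L \<Omega> (\<lambda>u. h (Q u)) = integral\<^sup>L (distr \<Omega> borel Q) h"
      by (subst integral_distr) auto
    also have "\<dots> = integral\<^sup>L (distr M borel X) h" using QN by simp
    also have "\<dots> = integral\<^sup>L M (\<lambda>x. h (X x))" by (rule integral_distr) auto
    finally show ?thesis using 1 by simp
  qed
  define \<mu> where "\<mu> = (\<integral>y. X y \<partial>M)"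
  define V where "V = (\<integral>x. \<bar>X x - \<mu>\<bar> powr p \<partial>M)"
  define \<nu> where "\<nu> = central_abs_moment_root p M X"
  have \<nu>V: "\<nu> = V powr (1 / p)" unfolding \<nu>_def V_def \<mu>_def central_abs_moment_root_def ..
  have intQ: "integrable \<Omega> Q" and intQ': "integral\<^sup>L \<Omega> Q = \<mu>"
    using transfer[of "\<lambda>x. x"] assms(3) unfolding \<mu>_def by auto
  have intG: "integrable \<Omega> (\<lambda>u. \<bar>Q u - \<mu>\<bar> powr p)" and intG': "(\<integral>u. \<bar>Q u - \<mu>\<bar> powr p \<partial>\<Omega>) = V"
    using transfer[of "\<lambda>x. \<bar>x - \<mu>\<bar> powr p"] assms(4) unfolding \<mu>_def V_def by auto
  have V0: "0 \<le> V" unfolding V_def by (rule Bochner_Integration.integral_nonneg) simp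
  have \<nu>0: "0 \<le> \<nu>" unfolding \<nu>V by simp
  define S where "S = {a..b}"
  define T where "T = {0<..<1} - S"
  have S_sets[measurable]: "S \<in> sets \<Omega>" using ab
    by (auto simp: \<Omega>_def S_def sets_restrict_space_iff)
  have T_sets[measurable]: "T \<in> sets \<Omega>" unfolding T_def using spO S_sets
    by (metis sets.compl_sets)
  have mS: "measure \<Omega> S = b - a" using ab unfolding \<Omega>_def S_def
    by (subst measure_restrict_space) auto
  have mT: "measure \<Omega> T = 1 - (b - a)" unfolding T_def spO[symmetric]
    by (subst O.prob_compl) (auto simp: mS)
  have iS: "(\<integral>u. indicator S u \<partial>\<Omega>) = b - a" using mS by simp
  have iT: "(\<integral>u. indicator T u \<partial>\<Omega>) = 1 - (b - a)" using mT by simp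
  have ST: "indicator S u + indicator T u = (1::real)" if "u \<in> space \<Omega>" for u
    using that ab unfolding spO S_def T_def by (auto simp: indicator_def)
  define m where "m = trimmed_mean (cdf_of M X) a b"
  have m_eq: "m = (1 / (b - a)) * (\<integral>u. indicator S u * Q u \<partial>\<Omega>)"
    unfolding m_def trimmed_mean_def S_def \<Omega>_def Q_def using ab
    by (simp add: set_integral_to_Omega)
  have nu_eq: "trimmed_nu p (cdf_of M X) a b
      = ((1 / (b - a)) * (\<integral>u. indicator S u * \<bar>Q u - m\<bar> powr p \<partial>\<Omega>)) powr (1 / p)"
    unfolding trimmed_nu_def m_def[symmetric] S_def \<Omega>_def Q_def using ab
    by (simp add: set_integral_to_Omega)

  have ba: "0 < b - a" "b - a < 1" using ab by auto
  have intg: "integrable \<Omega> (\<lambda>u. Q u - \<mu>)" using intQ by simp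
  have intSg: "integrable \<Omega> (\<lambda>u. indicator S u * (Q u - \<mu>))"
    using integrable_real_mult_indicator[OF S_sets intg] by (simp add: mult.commute)
  have intTg: "integrable \<Omega> (\<lambda>u. indicator T u * (Q u - \<mu>))"
    using integrable_real_mult_indicator[OF T_sets intg] by (simp add: mult.commute)
  have intTag: "integrable \<Omega> (\<lambda>u. indicator T u * \<bar>Q u - \<mu>\<bar>)"
    using integrable_real_mult_indicator[OF T_sets integrable_abs[OF intg]] by (simp add: mult.commute)
  have intiS: "integrable \<Omega> (indicator S :: real \<Rightarrow> real)" by (rule O.integrable_const_bound[where B=1]) (auto simp: indicator_def)
  define D where "D = (\<integral>u. indicator S u * (Q u - \<mu>) \<partial>\<Omega>)"
  have SQ: "(\<integral>u. indicator S u * Q u \<partial>\<Omega>) = D + \<mu> * (b - a)"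
  proof -
    have "(\<integral>u. indicator S u * Q u \<partial>\<Omega>) = (\<integral>u. indicator S u * (Q u - \<mu>) + \<mu> * indicator S u \<partial>\<Omega>)"
      by (rule Bochner_Integration.integral_cong) (auto simp: algebra_simps)
    also have "\<dots> = D + \<mu> * (b - a)"
      using intSg iS intiS unfolding D_def by (subst Bochner_Integration.integral_add) auto
    finally show ?thesis .
  qed
  have m_mu: "m = \<mu> + D / (b - a)" using m_eq SQ ba by (simp add: field_simps)
  have DT: "D = - (\<integral>u. indicator T u * (Q u - \<mu>) \<partial>\<Omega>)"
  proof -
    have "0 = (\<integral>u. Q u - \<mu> \<partial>\<Omega>)" using intQ intQ' O.prob_space by (simp add: Bochner_Integration.integral_diff)
    also have "\<dots> = (\<integral>u. indicator S u * (Q u - \<mu>) + indicator T u * (Q u - \<mu>) \<partial>\<Omega>)"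
      by (rule Bochner_Integration.integral_cong[OF refl]) (metis ST distrib_right mult_1)
    also have "\<dots> = D + (\<integral>u. indicator T u * (Q u - \<mu>) \<partial>\<Omega>)"
      unfolding D_def using intSg intTg by (rule Bochner_Integration.integral_add)
    finally show ?thesis by simp
  qed
  have absD: "\<bar>D\<bar> \<le> (\<integral>u. indicator T u * \<bar>Q u - \<mu>\<bar> \<partial>\<Omega>)"
  proof -
    have "\<bar>D\<bar> = norm (\<integral>u. indicator T u * (Q u - \<mu>) \<partial>\<Omega>)" using DT by simp
    also have "\<dots> \<le> (\<integral>u. norm (indicator T u * (Q u - \<mu>)) \<partial>\<Omega>)"
      by (rule integral_norm_bound)
    also have "\<dots> = (\<integral>u. indicator T u * \<bar>Q u - \<mu>\<bar> \<partial>\<Omega>)"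
      by (rule Bochner_Integration.integral_cong) (auto simp: indicator_def)
    finally show ?thesis .
  qed
  show ?thesis
  proof (cases "\<nu> = 0")
    case True
    then have "V = 0" using V0 unfolding \<nu>V by simp
    then have "AE u in \<Omega>. \<bar>Q u - \<mu>\<bar> powr p = 0"
      using intG intG' by (subst integral_nonneg_eq_0_iff_AE[symmetric]) auto
    then have AEQ: "AE u in \<Omega>. Q u = \<mu>" by eventually_elim simp
    have "(\<integral>u. indicator S u * (Q u - \<mu>) \<partial>\<Omega>) = (\<integral>u. 0 \<partial>\<Omega>)"
      by (rule integral_cong_AE) (use AEQ in auto)
    then have "D = 0" unfolding D_def by simp
    then have "m = \<mu>" using m_mu by simp
    have "(\<integral>u. indicator S u * \<bar>Q u - m\<bar> powr p \<partial>\<Omega>) = (\<integral>u. 0 \<partial>\<Omega>)"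
      by (rule integral_cong_AE) (use AEQ \<open>m = \<mu>\<close> in auto)
    then have "trimmed_nu p (cdf_of M X) a b = 0" unfolding nu_eq by simp
    then show ?thesis using True unfolding \<nu>_def by (simp add: Let_def)
  next
    case False
    then have \<nu>pos: "0 < \<nu>" using \<nu>0 by simp

    define \<xi> where "\<xi> = 1 - (b - a)"
    have \<xi>: "0 < \<xi>" "\<xi> < 1" using ba unfolding \<xi>_def by auto
    have Vpos: "0 < V" using \<nu>pos unfolding \<nu>V using V0 by (cases "V = 0") auto
    have \<nu>p: "\<nu> powr p = V" unfolding \<nu>V using Vpos p by (simp add: powr_powr)
    define G1 where "G1 = (\<integral>u. indicator T u * \<bar>Q u - \<mu>\<bar> \<partial>\<Omega>)"
    define c where "c = \<nu> * \<xi> powr (- 1 / p)"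
    have cpos: "0 < c" unfolding c_def using \<nu>pos \<xi> by simp
    have cp: "c powr p = V / \<xi>"
    proof -
      have "c powr p = \<nu> powr p * (\<xi> powr (- 1 / p)) powr p" unfolding c_def
        using \<nu>pos \<xi> by (simp add: powr_mult)
      also have "(\<xi> powr (- 1 / p)) powr p = \<xi> powr (-1)" using \<xi> p by (simp add: powr_powr)
      finally show ?thesis using \<nu>p \<xi> by (simp add: powr_minus divide_inverse)
    qed
    define K where "K = p * c powr (p - 1)"
    have Kpos: "0 < K" unfolding K_def using p cpos by simp
    have intiT: "integrable \<Omega> (indicator T :: real \<Rightarrow> real)" by (rule O.integrable_const_bound[where B=1]) (auto simp: indicator_def)
    have "(\<integral>u. (c powr p - K * c) * indicator T u + K * (indicator T u * \<bar>Q u - \<mu>\<bar>) \<partial>\<Omega>)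
        \<le> (\<integral>u. \<bar>Q u - \<mu>\<bar> powr p \<partial>\<Omega>)"
    proof (rule integral_mono)
      show "integrable \<Omega> (\<lambda>u. (c powr p - K * c) * indicator T u + K * (indicator T u * \<bar>Q u - \<mu>\<bar>))"
        using intiT intTag by auto
      show "integrable \<Omega> (\<lambda>u. \<bar>Q u - \<mu>\<bar> powr p)" by (rule intG)
      fix u
      have "c powr p + K * (\<bar>Q u - \<mu>\<bar> - c) \<le> \<bar>Q u - \<mu>\<bar> powr p"
        unfolding K_def using tangent_powr[OF p cpos, of "\<bar>Q u - \<mu>\<bar>"] by (simp add: mult.assoc)
      then show "(c powr p - K * c) * indicator T u + K * (indicator T u * \<bar>Q u - \<mu>\<bar>) \<le> \<bar>Q u - \<mu>\<bar> powr p"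
        by (cases "u \<in> T") (auto simp: algebra_simps)
    qed
    also have "(\<integral>u. (c powr p - K * c) * indicator T u + K * (indicator T u * \<bar>Q u - \<mu>\<bar>) \<partial>\<Omega>)
        = (c powr p - K * c) * \<xi> + K * G1"
      using intiT intTag iT unfolding G1_def \<xi>_def by (subst Bochner_Integration.integral_add) auto
    finally have "(c powr p - K * c) * \<xi> + K * G1 \<le> V" using intG' by simp
    then have "K * (G1 - c * \<xi>) \<le> 0" using cp \<xi> by (simp add: algebra_simps)
    then have G1le: "G1 \<le> c * \<xi>" using Kpos by (simp add: mult_le_0_iff)
    have c\<xi>: "c * \<xi> = \<xi> powr ((p - 1) / p) * \<nu>"
    proof -
      have "\<xi> powr (- 1 / p) * \<xi> = \<xi> powr (- 1 / p + 1)" using \<xi> powr_add[of \<xi> "- 1 / p" 1] by simp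
      also have "- 1 / p + 1 = (p - 1) / p" using p by (simp add: field_simps)
      finally show ?thesis unfolding c_def by simp
    qed
    define B where "B = \<xi> powr ((p - 1) / p) / (1 - \<xi>) * \<nu>"
    define A where "A = \<nu> / (1 - \<xi>) powr (1 / p)"
    have Bpos: "0 < B" unfolding B_def using \<xi> \<nu>pos by simp
    have Apos: "0 < A" unfolding A_def using \<xi> \<nu>pos by simp
    have ymB: "\<bar>\<mu> - m\<bar> \<le> B"
    proof -
      have "\<bar>\<mu> - m\<bar> = \<bar>D\<bar> / (b - a)" using m_mu ba by simp
      also have "\<dots> \<le> G1 / (b - a)" using absD ba unfolding G1_def by (simp add: divide_right_mono)
      also have "\<dots> \<le> c * \<xi> / (b - a)" using G1le ba by (simp add: divide_right_mono)
      also have "\<dots> = B" unfolding B_def c\<xi> by (simp add: \<xi>_def)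
      finally show ?thesis .
    qed
    have Ap: "A powr p = V / (b - a)"
    proof -
      have "A powr p = \<nu> powr p / ((1 - \<xi>) powr (1 / p)) powr p" unfolding A_def
        using \<nu>pos \<xi> by (simp add: powr_divide)
      also have "((1 - \<xi>) powr (1 / p)) powr p = 1 - \<xi>" using \<xi> p by (simp add: powr_powr)
      finally show ?thesis using \<nu>p unfolding \<xi>_def by simp
    qed
    define t where "t = B / (A + B)"
    have t: "0 < t" "t < 1" unfolding t_def using Apos Bpos by auto
    define R where "R = (\<lambda>u. (1 - t) powr (1 - p) * \<bar>Q u - \<mu>\<bar> powr p + t powr (1 - p) * \<bar>\<mu> - m\<bar> powr p * indicator S u)"
    have intR: "integrable \<Omega> R" unfolding R_def using intG intiS by auto
    have ptw: "indicator S u * \<bar>Q u - m\<bar> powr p \<le> R u" for u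
    proof -
      have "\<bar>(Q u - \<mu>) + (\<mu> - m)\<bar> powr p \<le> (1 - t) powr (1 - p) * \<bar>Q u - \<mu>\<bar> powr p + t powr (1 - p) * \<bar>\<mu> - m\<bar> powr p"
        by (rule convex_split_powr[OF p t])
      then show ?thesis unfolding R_def by (cases "u \<in> S") auto
    qed
    have intL: "integrable \<Omega> (\<lambda>u. indicator S u * \<bar>Q u - m\<bar> powr p)"
    proof (rule Bochner_Integration.integrable_bound[OF intR])
      show "(\<lambda>u. indicator S u * \<bar>Q u - m\<bar> powr p) \<in> borel_measurable \<Omega>" by measurable
      show "AE u in \<Omega>. norm (indicator S u * \<bar>Q u - m\<bar> powr p) \<le> norm (R u)"
      proof (rule AE_I2)
        fix u
        have "0 \<le> indicator S u * \<bar>Q u - m\<bar> powr p" by simp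
        then show "norm (indicator S u * \<bar>Q u - m\<bar> powr p) \<le> norm (R u)" using ptw[of u] by simp
      qed
    qed
    have "(\<integral>u. indicator S u * \<bar>Q u - m\<bar> powr p \<partial>\<Omega>) \<le> (\<integral>u. R u \<partial>\<Omega>)"
      by (rule integral_mono[OF intL intR ptw])
    also have "(\<integral>u. R u \<partial>\<Omega>) = (1 - t) powr (1 - p) * V + t powr (1 - p) * \<bar>\<mu> - m\<bar> powr p * (b - a)"
      unfolding R_def using intG intiS intG' iS by (subst Bochner_Integration.integral_add) auto
    finally have IS: "(\<integral>u. indicator S u * \<bar>Q u - m\<bar> powr p \<partial>\<Omega>) \<le> \<dots>" .
    have "(1 / (b - a)) * (\<integral>u. indicator S u * \<bar>Q u - m\<bar> powr p \<partial>\<Omega>)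
        \<le> (1 / (b - a)) * ((1 - t) powr (1 - p) * V + t powr (1 - p) * \<bar>\<mu> - m\<bar> powr p * (b - a))"
      using IS ba by (intro mult_left_mono) auto
    also have "\<dots> = (1 - t) powr (1 - p) * A powr p + t powr (1 - p) * \<bar>\<mu> - m\<bar> powr p"
    proof -
      have hV: "V = A powr p * (b - a)" using Ap ba by (simp add: field_simps)
      show ?thesis unfolding hV using ba by (simp add: field_simps)
    qed
    also have "\<dots> \<le> (1 - t) powr (1 - p) * A powr p + t powr (1 - p) * B powr p"
      using ymB p t by (auto intro!: mult_left_mono powr_mono2)
    also have "\<dots> = (A + B) powr p" unfolding t_def by (rule mink_alg[OF Apos Bpos])
    finally have main: "(1 / (b - a)) * (\<integral>u. indicator S u * \<bar>Q u - m\<bar> powr p \<partial>\<Omega>) \<le> (A + B) powr p" .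
    have "trimmed_nu p (cdf_of M X) a b \<le> ((A + B) powr p) powr (1 / p)"
      unfolding nu_eq using p ba
      by (intro powr_mono2 main) (auto intro!: mult_nonneg_nonneg Bochner_Integration.integral_nonneg)
    also have "\<dots> = A + B" using Apos Bpos p by (simp add: powr_powr)
    also have "A + B = (1 / ((1 - \<xi>) powr (1 / p)) + \<xi> powr ((p - 1) / p) / (1 - \<xi>)) * \<nu>"
      unfolding A_def B_def by (simp add: algebra_simps)
    finally show ?thesis unfolding \<xi>_def \<nu>_def by (simp add: Let_def)
  qed
qed

end
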